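(* Consider an execution of the convergence algorithm described in the context, with $n>5f$ robots of which at most $f$ are Byzantine and $m$ are correct. Let $U_{(1)}(t)\le\dots\le U_{(m)}(t)$ be the sorted positions of the correct robots at time $t$. If a correct robot $i$ with position $x_i$ is elected at time $t$ (i.e., its observation at time $t$ makes it elected), then $x_i\le U_{(f+1)}(t)$ or $x_i\ge U_{(m-f)}(t)$.
   Context: Setting: $n$ robots on the real line, of which at most $f$ are Byzantine (arbitrary positions). Robots observe the multiset $P(t)$ of all $n$ positions, sorted $P_1(t)\le\dots\le P_n(t)$. Algorithm: robot $i$ with position $x_i$ is elected iff $x_i\le P_{f+1}(t)$ or $x_i\ge P_{n-f}(t)$. Only elected robots move, toward the midpoint of $\min(x_i,P_{2f+1}(t))$ and $\max(x_i,P_{n-2f}(t))$. *)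

theory Defs
  imports Complex_Main "HOL-Library.Multiset"
begin

definition kth :: "real multiset \<Rightarrow> nat \<Rightarrow> real" where
  "kth X k = sorted_list_of_multiset X ! (k - 1)"

definition elected :: "nat \<Rightarrow> nat \<Rightarrow> real multiset \<Rightarrow> real \<Rightarrow> bool" where
  "elected n f P x \<longleftrightarrow> x \<le> kth P (f + 1) \<or> kth P (n - f) \<le> x"

end

theory Submission
  imports Defs
begin

lemma kth_props:
  fixes X :: "real multiset"
  shows "sorted (sorted_list_of_multiset X)" "length (sorted_list_of_multiset X) = size X"
    "\<And>P. size (filter_mset P X) = length (filter P (sorted_list_of_multiset X))"
proof -
  show "sorted (sorted_list_of_multiset X)" by simp
  show "length (sorted_list_of_multiset X) = size X" by (metis mset_sorted_list_of_multiset size_mset)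
  fix P
  have "filter_mset P X = mset (filter P (sorted_list_of_multiset X))"
    by (metis mset_filter mset_sorted_list_of_multiset)
  then show "size (filter_mset P X) = length (filter P (sorted_list_of_multiset X))" by (metis size_mset)
qed

lemma kth_L2:
  fixes X :: "real multiset"
  assumes "1 \<le> k" "k \<le> size X"
  shows "k \<le> size (filter_mset (\<lambda>z. z \<le> kth X k) X)"
proof -
  define xs where "xs = sorted_list_of_multiset X"
  note p = kth_props[where X=X, folded xs_def]
  have "\<forall>z\<in>set (take k xs). z \<le> xs ! (k-1)"
  proof
    fix z assume "z \<in> set (take k xs)"
    then obtain i where "i < k" "i < length xs" "z = xs ! i"
      by (auto simp: in_set_conv_nth)
    then show "z \<le> xs ! (k-1)" using p(1) p(2) assms
      by (metis One_nat_def Suc_pred le_simps(2) less_imp_le_nat not_less_eq sorted_nth_mono order_less_le_trans le_less_trans diff_less zero_less_one less_le_trans)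
  qed
  then have "filter (\<lambda>z. z \<le> xs ! (k-1)) (take k xs) = take k xs" by simp
  then have "k = length (filter (\<lambda>z. z \<le> xs ! (k-1)) (take k xs))" using assms p(2) by simp
  also have "\<dots> \<le> length (filter (\<lambda>z. z \<le> xs ! (k-1)) xs)"
    by (metis append_take_drop_id filter_append length_append le_add1)
  finally show ?thesis using p(3) unfolding kth_def xs_def by simp
qed

lemma kth_L:
  fixes X :: "real multiset"
  assumes "1 \<le> k" "k \<le> size X" "k \<le> size (filter_mset (\<lambda>z. z \<le> y) X)"
  shows "kth X k \<le> y"
proof (rule ccontr)
  assume c: "\<not> kth X k \<le> y"
  define xs where "xs = sorted_list_of_multiset X"
  note p = kth_props[where X=X, folded xs_def]
  have big: "y < xs ! (k-1)" using c unfolding kth_def xs_def by simp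
  have "\<forall>z\<in>set (drop (k-1) xs). \<not> z \<le> y"
  proof
    fix z assume "z \<in> set (drop (k-1) xs)"
    then obtain j where j: "j < length xs - (k-1)" "z = xs ! (k-1+j)"
      by (auto simp: in_set_conv_nth)
    then obtain i where "i < length xs" "k - 1 \<le> i" "z = xs ! i"
      by (metis le_add1 less_diff_conv add.commute)
    then have "xs ! (k-1) \<le> z" using p(1) by (simp add: sorted_nth_mono)
    then show "\<not> z \<le> y" using big by simp
  qed
  then have "filter (\<lambda>z. z \<le> y) (drop (k-1) xs) = []" by (simp add: filter_empty_conv)
  then have "length (filter (\<lambda>z. z \<le> y) xs) = length (filter (\<lambda>z. z \<le> y) (take (k-1) xs))"
    by (metis append_take_drop_id filter_append append_Nil2)
  also have "\<dots> \<le> length (take (k-1) xs)" by (rule length_filter_le)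
  also have "\<dots> \<le> k - 1" by simp
  finally show False using assms p(3) by simp
qed

theorem lemma8:
  fixes n f m :: nat
    and U :: "real multiset"  \<comment> \<open>positions of the m correct robots at time t\<close>
    and B :: "real multiset"  \<comment> \<open>positions of the Byzantine robots at time t\<close>
    and x :: real
  assumes "n > 5 * f"
    and "size U = m"
    and "size B \<le> f"
    and "size U + size B = n"
    and "x \<in># U"
    and "elected n f (U + B) x"
  shows "x \<le> kth U (f + 1) \<or> kth U (m - f) \<le> x"
proof -
  have m: "m > 4 * f" "f + 1 \<le> m" "1 \<le> m - f" using assms by auto
  have szP: "size (U + B) = n" using assms by simp
  have A: "kth (U + B) (f+1) \<le> kth U (f+1)"
  proof (rule kth_L)
    show "1 \<le> f + 1" by simp
    show "f + 1 \<le> size (U + B)" using m assms by simp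
    have "f + 1 \<le> size (filter_mset (\<lambda>z. z \<le> kth U (f+1)) U)"
      using kth_L2[of "f+1" U] m assms by simp
    also have "\<dots> \<le> size (filter_mset (\<lambda>z. z \<le> kth U (f+1)) (U + B))" by simp
    finally show "f + 1 \<le> size (filter_mset (\<lambda>z. z \<le> kth U (f+1)) (U + B))" .
  qed
  have Bb: "kth U (m - f) \<le> kth (U + B) (n - f)"
  proof (rule ccontr)
    assume c: "\<not> ?thesis"
    define y where "y = kth (U + B) (n - f)"
    have "n - f \<le> size (filter_mset (\<lambda>z. z \<le> y) (U + B))"
      unfolding y_def using kth_L2[of "n - f" "U + B"] szP m assms by simp
    moreover have "size (filter_mset (\<lambda>z. z \<le> y) U) < m - f"
      using kth_L[of "m - f" U y] c m assms unfolding y_def by fastforce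
    moreover have "size (filter_mset (\<lambda>z. z \<le> y) B) \<le> size B" by (rule size_filter_mset_lesseq)
    moreover have "size (filter_mset (\<lambda>z. z \<le> y) (U + B)) = size (filter_mset (\<lambda>z. z \<le> y) U) + size (filter_mset (\<lambda>z. z \<le> y) B)" by simp
    ultimately show False using assms m by linarith
  qed
  show ?thesis using assms(6) A Bb unfolding elected_def by auto
qed

end
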